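(* Let $u\in\dot W^{1,1}(\mathbb R)$ be compactly supported. Then $\nu_{-1}(E_{\lambda,-1}[u])<\infty$ for all $\lambda>0$.
   Context: Here $N=1$: $\nu_{-1}(E)=\iint_{(x,y)\in E,\,x\ne y}|x-y|^{-2}\,dx\,dy$ for measurable $E\subset\mathbb R^2$, and $E_{\lambda,-1}[u]=\{(x,y):x\ne y,\ |u(x)-u(y)|>\lambda\}$. $\dot W^{1,1}(\mathbb R)$: locally integrable functions whose distributional derivative is in $L^1(\mathbb R)$. *)

theory Defs
  imports "HOL-Analysis.Analysis"
begin

definition test_function :: "(real \<Rightarrow> real) \<Rightarrow> bool" where
  "test_function \<phi> \<longleftrightarrow>
     (\<forall>n x. ((deriv ^^ n) \<phi>) differentiable (at x)) \<and> bounded {x. \<phi> x \<noteq> 0}"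

definition locally_integrable :: "(real \<Rightarrow> real) \<Rightarrow> bool" where
  "locally_integrable u \<longleftrightarrow> (\<forall>K. compact K \<longrightarrow> set_integrable lborel K u)"

definition dot_W11 :: "(real \<Rightarrow> real) set" where
  "dot_W11 = {u. locally_integrable u \<and>
     (\<exists>g. integrable lborel g \<and>
        (\<forall>\<phi>. test_function \<phi> \<longrightarrow>
            (\<integral>x. u x * deriv \<phi> x \<partial>lborel) = - (\<integral>x. g x * \<phi> x \<partial>lborel)))}"

definition nu_m1 :: "(real \<times> real) set \<Rightarrow> ennreal" where
  "nu_m1 E = (\<integral>\<^sup>+ p. indicator E p *
       (if fst p \<noteq> snd p then ennreal (1 / \<bar>fst p - snd p\<bar> ^ 2) else 0)
     \<partial>(lborel \<Otimes>\<^sub>M lborel))"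

definition E_lam :: "real \<Rightarrow> (real \<Rightarrow> real) \<Rightarrow> (real \<times> real) set" where
  "E_lam lam u = {(x, y). x \<noteq> y \<and> \<bar>u x - u y\<bar> > lam}"

end

theory Submission
  imports Defs "HOL-Computational_Algebra.Polynomial"
begin



fun Dn :: "nat \<Rightarrow> (real \<Rightarrow> real) \<Rightarrow> bool" where
  "Dn 0 f = (\<forall>x. f differentiable at x)"
| "Dn (Suc n) f = ((\<forall>x. f differentiable at x) \<and> Dn n (deriv f))"

lemma dd: "(\<forall>x. f differentiable at x) \<Longrightarrow> (f has_real_derivative deriv f x) (at x)" 
  using DERIV_deriv_iff_real_differentiable by blast

lemma dchain: "(\<forall>x. f differentiable at x) \<Longrightarrow> (\<forall>x. h differentiable at x) \<Longrightarrow> (\<lambda>x. f (h x)) differentiable at x"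
 using differentiable_chain_at[of h x f] by (auto simp: o_def)

lemma Dn_diff: "Dn n f \<Longrightarrow> f differentiable at x"
  by (cases n) auto

lemma Dn_iff: "Dn n f \<longleftrightarrow> (\<forall>k\<le>n. \<forall>x. (deriv ^^ k) f differentiable at x)"
proof (induction n arbitrary: f)
  case 0 then show ?case by simp
next
  case (Suc n)
  have "(\<forall>k\<le>Suc n. \<forall>x. (deriv ^^ k) f differentiable at x) \<longleftrightarrow>
        (\<forall>x. f differentiable at x) \<and> (\<forall>k\<le>n. \<forall>x. (deriv ^^ k) (deriv f) differentiable at x)"
    (is "?L = ?R")
  proof
    assume ?L then show ?R
      by (metis (no_types, lifting) Suc_le_mono comp_apply funpow_0 funpow_Suc_right zero_le)
  next
    assume r: ?R
    show ?L
    proof (intro allI impI)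
      fix k x assume "k \<le> Suc n"
      then show "(deriv ^^ k) f differentiable at x"
        using r by (cases k) (auto simp: funpow_Suc_right simp del: funpow.simps)
    qed
  qed
  then show ?case using Suc by simp
qed

lemma Dn_mono: "Dn (Suc n) f \<Longrightarrow> Dn n f"
  by (auto simp: Dn_iff)

lemma deriv_add': fixes f g :: "real \<Rightarrow> real" shows "(\<forall>x. f differentiable at x) \<Longrightarrow> (\<forall>x. g differentiable at x) \<Longrightarrow>
   deriv (\<lambda>x. f x + g x) = (\<lambda>x. deriv f x + deriv g x)"
  by (rule ext, rule DERIV_imp_deriv, rule DERIV_add) (auto intro: dd)

lemma deriv_mult': fixes f g :: "real \<Rightarrow> real" shows "(\<forall>x. f differentiable at x) \<Longrightarrow> (\<forall>x. g differentiable at x) \<Longrightarrow>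
   deriv (\<lambda>x. f x * g x) = (\<lambda>x. deriv f x * g x + f x * deriv g x)"
proof (rule ext)
  fix x assume a: "\<forall>x. f differentiable at x" "\<forall>x. g differentiable at x"
  have "(f has_real_derivative deriv f x) (at x)" "(g has_real_derivative deriv g x) (at x)"
    using a dd by auto
  then show "deriv (\<lambda>x. f x * g x) x = deriv f x * g x + f x * deriv g x"
    by (intro DERIV_imp_deriv) (auto intro!: derivative_eq_intros)
qed

lemma Dn_add: "Dn n f \<Longrightarrow> Dn n g \<Longrightarrow> Dn n (\<lambda>x. f x + g x)"
proof (induction n arbitrary: f g)
  case 0 then show ?case by auto
next
  case (Suc n) then show ?case by (auto simp: deriv_add')
qed

lemma Dn_const: "Dn n (\<lambda>x. c)"
proof (induction n arbitrary: c)
  case 0 then show ?case by auto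
next
  case (Suc n)
  have "deriv (\<lambda>x. c) = (\<lambda>x. 0)" by auto
  then show ?case using Suc by auto
qed

lemma Dn_id: "Dn n (\<lambda>x. x)"
proof (cases n)
  case 0 then show ?thesis by auto
next
  case (Suc m)
  have "deriv (\<lambda>x. x) = (\<lambda>x. 1)" by auto
  then show ?thesis using Suc Dn_const by auto
qed

lemma Dn_mult: "Dn n f \<Longrightarrow> Dn n g \<Longrightarrow> Dn n (\<lambda>x. f x * g x)"
proof (induction n arbitrary: f g)
  case 0 then show ?case by auto
next
  case (Suc n)
  have df: "\<forall>x. f differentiable at x" "\<forall>x. g differentiable at x" using Suc.prems by auto
  have "Dn n (\<lambda>x. deriv f x * g x + f x * deriv g x)"
    using Suc.IH Suc.prems Dn_mono by (intro Dn_add) auto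
  then show ?case using df by (auto simp: deriv_mult')
qed

lemma Dn_minus: "Dn n f \<Longrightarrow> Dn n (\<lambda>x. - f x)"
  using Dn_mult[OF Dn_const[of n "-1"]] by simp

lemma Dn_sub: "Dn n f \<Longrightarrow> Dn n g \<Longrightarrow> Dn n (\<lambda>x. f x - g x)"
  using Dn_add[OF _ Dn_minus] by simp

lemma Dn_compose: "Dn n f \<Longrightarrow> Dn n h \<Longrightarrow> Dn n (\<lambda>x. f (h x))"
proof (induction n arbitrary: f h)
  case 0 then show ?case by (auto intro: dchain)
next
  case (Suc n)
  have df: "\<forall>x. f differentiable at x" "\<forall>x. h differentiable at x" using Suc.prems by auto
  have "deriv (\<lambda>x. f (h x)) = (\<lambda>x. deriv f (h x) * deriv h x)"
    by (rule ext, rule DERIV_imp_deriv, rule DERIV_chain2)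
       (use df dd in auto)
  moreover have "Dn n (\<lambda>x. deriv f (h x) * deriv h x)"
    using Suc.IH Suc.prems Dn_mono by (intro Dn_mult) auto
  ultimately show ?case using df by (auto intro: dchain)
qed

lemma Dn_inverse: "(\<And>x. h x \<noteq> 0) \<Longrightarrow> Dn n h \<Longrightarrow> Dn n (\<lambda>x. inverse (h x))"
proof (induction n arbitrary: h)
  case 0
  have "((\<lambda>x. inverse (h x)) has_real_derivative - (deriv h x * inverse (h x ^ Suc (Suc 0)))) (at x)" for x
    using DERIV_inverse_fun[of h "deriv h x" x UNIV] 0 dd[of h x] by auto
  then show ?case unfolding Dn.simps real_differentiable_def by blast
next
  case (Suc n)
  have dh: "\<forall>x. h differentiable at x" using Suc.prems by auto
  have d: "((\<lambda>x. inverse (h x)) has_real_derivative - (deriv h x * (inverse (h x) * inverse (h x)))) (at x)" for x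
    using DERIV_inverse_fun[of h "deriv h x" x UNIV] dh Suc.prems(1)
    by (auto simp: DERIV_deriv_iff_real_differentiable power2_eq_square[symmetric] power_inverse)
  then have "deriv (\<lambda>x. inverse (h x)) = (\<lambda>x. - (deriv h x * (inverse (h x) * inverse (h x))))"
    by (auto intro: DERIV_imp_deriv)
  moreover have "Dn n (\<lambda>x. - (deriv h x * (inverse (h x) * inverse (h x))))"
    using Suc.IH[OF Suc.prems(1)] Suc.prems Dn_mono
    by (intro Dn_minus Dn_mult) auto
  ultimately show ?case using d by (auto simp: real_differentiable_def)
qed

lemma Dn_exp: "Dn n exp"
proof (induction n)
  case 0 then show ?case using DERIV_exp unfolding Dn.simps real_differentiable_def by blast
next
  case (Suc n)
  have "deriv exp = exp" by (auto intro: DERIV_imp_deriv DERIV_exp)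
  then show ?case using Suc DERIV_exp unfolding Dn.simps real_differentiable_def by metis
qed

definition flat :: "real poly \<Rightarrow> real \<Rightarrow> real" where
  "flat P x = (if x > 0 then poly P (inverse x) * exp (- inverse x) else 0)"

definition nxt :: "real poly \<Rightarrow> real poly" where
  "nxt P = [:0,0,1:] * (P - pderiv P)"

lemma poly_exp_lim: fixes P :: "real poly" shows "((\<lambda>t. poly P t * exp (-t)) \<longlongrightarrow> 0) at_top"
proof -
  have "((\<lambda>t. \<Sum>i\<le>degree P. coeff P i * (t ^ i / exp t)) \<longlongrightarrow> (\<Sum>i\<le>degree P. coeff P i * 0)) at_top"
    by (intro tendsto_sum tendsto_mult tendsto_const tendsto_power_div_exp_0)
  moreover have "(\<Sum>i\<le>degree P. coeff P i * (t ^ i / exp t)) = poly P t * exp (-t)" for t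
    by (simp add: poly_altdef sum_distrib_right sum_divide_distrib[symmetric] exp_minus divide_inverse mult.assoc)
  ultimately show ?thesis by simp
qed

lemma flat_right_lim: fixes P :: "real poly" shows "((\<lambda>y. poly P (inverse y) * exp (- inverse y)) \<longlongrightarrow> 0) (at_right 0)"
  using filterlim_compose[OF poly_exp_lim filterlim_inverse_at_top_right] by simp

lemma flat_deriv: "(flat P has_real_derivative flat (nxt P) x) (at x)"
proof -
  consider "x > 0" | "x < 0" | "x = 0" by linarith
  then show ?thesis
  proof cases
    case 1
    have "((\<lambda>x. poly P (inverse x) * exp (- inverse x)) has_real_derivative
       poly (pderiv P) (inverse x) * (- inverse (x^2)) * exp (- inverse x) +
       poly P (inverse x) * (exp (- inverse x) * inverse (x^2))) (at x)"
      using 1 by (auto intro!: derivative_eq_intros DERIV_chain2[OF poly_DERIV]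
          simp: power2_eq_square field_simps)
    moreover have "poly (pderiv P) (inverse x) * (- inverse (x^2)) * exp (- inverse x) +
       poly P (inverse x) * (exp (- inverse x) * inverse (x^2)) = flat (nxt P) x"
      using 1 by (simp add: flat_def nxt_def field_simps power2_eq_square)
    ultimately have "((\<lambda>x. poly P (inverse x) * exp (- inverse x)) has_real_derivative flat (nxt P) x) (at x)"
      by simp
    then show ?thesis
      by (rule has_field_derivative_transform_within_open[where S="{0<..}"]) (use 1 in \<open>auto simp: flat_def\<close>)
  next
    case 2
    have "((\<lambda>x. 0) has_real_derivative flat (nxt P) x) (at x)"
      using 2 by (simp add: flat_def)
    then show ?thesis
      by (rule has_field_derivative_transform_within_open[where S="{..<0}"]) (use 2 in \<open>auto simp: flat_def\<close>)
  next
    case 3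
    have l: "((\<lambda>y. (flat P y - flat P 0) / (y - 0)) \<longlongrightarrow> 0) (at_left 0)"
      by (rule tendsto_eventually) (auto simp: flat_def eventually_at_left_field intro: exI[of _ "-1"])
    have "((\<lambda>y. poly ([:0,1:] * P) (inverse y) * exp (- inverse y)) \<longlongrightarrow> 0) (at_right 0)"
      by (rule flat_right_lim)
    then have r: "((\<lambda>y. (flat P y - flat P 0) / (y - 0)) \<longlongrightarrow> 0) (at_right 0)"
      by (rule Lim_transform_eventually)
         (auto simp: flat_def eventually_at_right_field field_simps intro!: exI[of _ 1])
    have "((\<lambda>y. (flat P y - flat P 0) / (y - 0)) \<longlongrightarrow> 0) (at 0)"
      using l r filterlim_at_split by blast
    then show ?thesis using 3 by (simp add: has_field_derivative_iff flat_def)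
  qed
qed

lemma deriv_flat: "deriv (flat P) = flat (nxt P)"
  using flat_deriv DERIV_imp_deriv by blast

lemma Dn_flat: "Dn n (flat P)"
proof (induction n arbitrary: P)
  case 0 then show ?case using flat_deriv unfolding Dn.simps real_differentiable_def by blast
next
  case (Suc n) then show ?case using flat_deriv deriv_flat unfolding Dn.simps real_differentiable_def by metis
qed

definition Sf :: "real \<Rightarrow> real" where
  "Sf x = flat 1 x * inverse (flat 1 x + flat 1 (1 - x))"

lemma flat1: "flat 1 x = (if x > 0 then exp (- inverse x) else 0)"
  by (simp add: flat_def)

lemma den_pos: "flat 1 x + flat 1 (1 - x) > 0"
  by (auto simp: flat1 add_pos_nonneg add_nonneg_pos)

lemma Dn_affine: "Dn n (\<lambda>x. c * (x - a))"
  by (intro Dn_mult Dn_const Dn_sub Dn_id)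

lemma Dn_Sf: "Dn n Sf"
proof -
  have "Dn n (\<lambda>x. flat 1 x * inverse (flat 1 x + flat 1 (1 - x)))"
    using den_pos
  proof (intro Dn_mult Dn_flat Dn_inverse)
    show "Dn n (\<lambda>x. flat 1 x + flat 1 (1 - x))"
      by (intro Dn_add Dn_flat Dn_compose[where f="flat 1", OF Dn_flat] Dn_sub Dn_const Dn_id)
  qed (metis den_pos less_irrefl)
  then show ?thesis unfolding Sf_def[abs_def] .
qed

lemma Sf_le0: "x \<le> 0 \<Longrightarrow> Sf x = 0"
  by (simp add: Sf_def flat1)

lemma Sf_ge1: "x \<ge> 1 \<Longrightarrow> Sf x = 1"
  by (simp add: Sf_def flat1)

lemma flat1_nonneg: "flat 1 x \<ge> 0" by (simp add: flat1)

lemma Sf_nonneg: "0 \<le> Sf x"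
  using den_pos[of x] flat1_nonneg[of x] unfolding Sf_def by simp

lemma Sf_le1: "Sf x \<le> 1"
proof -
  have "flat 1 x / (flat 1 x + flat 1 (1 - x)) \<le> 1"
    using den_pos[of x] flat1_nonneg[of "1-x"] by (simp add: divide_le_eq_1)
  then show ?thesis by (simp add: Sf_def divide_inverse)
qed

lemma Sf_deriv: "(Sf has_real_derivative deriv Sf x) (at x)"
  using Dn_Sf[of 0] dd by auto

lemma isCont_dSf: "isCont (deriv Sf) x"
  using Dn_Sf[of 1] by (auto intro: differentiable_imp_continuous_within)

lemma continuous_on_dSf: "continuous_on A (deriv Sf)"
  using isCont_dSf continuous_at_imp_continuous_on by blast

lemma dSf_out: assumes "x < 0 \<or> x > 1" shows "deriv Sf x = 0"
proof -
  { assume "x < 0"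
    have "((\<lambda>x. 0) has_real_derivative 0) (at x)" by simp
    then have "(Sf has_real_derivative 0) (at x)"
      by (rule has_field_derivative_transform_within_open[where S="{..<0}"]) (use \<open>x<0\<close> Sf_le0 in auto) }
  moreover
  { assume "x > 1"
    have "((\<lambda>x. 1) has_real_derivative 0) (at x)" by simp
    then have "(Sf has_real_derivative 0) (at x)"
      by (rule has_field_derivative_transform_within_open[where S="{1<..}"]) (use \<open>x>1\<close> Sf_ge1 in auto) }
  ultimately show ?thesis using assms DERIV_imp_deriv by blast
qed

lemma dSf_bound: "\<exists>M. \<forall>x. \<bar>deriv Sf x\<bar> \<le> M"
proof -
  have "compact (deriv Sf ` {0..1})"
    by (intro compact_continuous_image continuous_on_dSf) auto
  then obtain M where M: "\<And>y. y \<in> deriv Sf ` {0..1} \<Longrightarrow> norm y \<le> M"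
    using compact_imp_bounded bounded_iff by metis
  have "\<bar>deriv Sf x\<bar> \<le> max M 0" for x
    using M[of "deriv Sf x"] dSf_out[of x] by (cases "x < 0 \<or> x > 1") auto
  then show ?thesis by blast
qed

definition phi :: "real \<Rightarrow> real \<Rightarrow> real \<Rightarrow> real \<Rightarrow> real" where
  "phi c a b x = Sf (c * (x - a)) - Sf (c * (x - b))"

lemma test_phi: assumes "c > 0" shows "test_function (phi c a b)"
proof -
  have "Dn n (phi c a b)" for n
    unfolding phi_def[abs_def] by (intro Dn_sub Dn_compose[where f=Sf, OF Dn_Sf Dn_affine])
  moreover have "{x. phi c a b x \<noteq> 0} \<subseteq> {min a b .. max a b + 1 / c}"
  proof
    fix x assume x: "x \<in> {x. phi c a b x \<noteq> 0}"
    show "x \<in> {min a b .. max a b + 1 / c}"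
    proof (rule ccontr)
      assume "x \<notin> {min a b .. max a b + 1 / c}"
      then consider "x < min a b" | "x > max a b + 1 / c" by (auto simp: not_le)
      then show False
      proof cases
        case 1 then have "c * (x - a) \<le> 0" "c * (x - b) \<le> 0" using assms
          by (auto intro!: mult_nonneg_nonpos)
        then show False using x by (simp add: phi_def Sf_le0)
      next
        case 2 then have "x - a \<ge> 1 / c" "x - b \<ge> 1/c" by auto
        then have "c * (x - a) \<ge> 1" "c * (x - b) \<ge> 1" using assms by (simp_all add: field_simps)
        then show False using x by (simp add: phi_def Sf_ge1)
      qed
    qed
  qed
  then have "bounded {x. phi c a b x \<noteq> 0}" by (rule bounded_subset[OF bounded_closed_interval])
  moreover have "\<forall>n x. (deriv ^^ n) (phi c a b) differentiable at x"
    using calculation(1) Dn_iff by (meson order_refl)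
  ultimately show ?thesis unfolding test_function_def by blast
qed

lemma deriv_phi: "deriv (phi c a b) x = c * deriv Sf (c * (x - a)) - c * deriv Sf (c * (x - b))"
proof -
  have "(phi c a b has_real_derivative deriv Sf (c * (x - a)) * c - deriv Sf (c * (x - b)) * c) (at x)"
    unfolding phi_def[abs_def]
    by (intro derivative_intros DERIV_chain2[OF Sf_deriv]) (auto intro!: derivative_eq_intros)
  then show ?thesis by (auto dest: DERIV_imp_deriv simp: mult.commute)
qed

lemma phi_abs: "\<bar>phi c a b x\<bar> \<le> 1"
  using Sf_nonneg[of "c * (x - a)"] Sf_le1[of "c * (x - a)"] Sf_nonneg[of "c * (x - b)"] Sf_le1[of "c * (x - b)"]
  unfolding phi_def by linarith

lemma Sf_lim: "(\<lambda>n. Sf (real (Suc n) * (t - a))) \<longlonglongrightarrow> indicator {a<..} t"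
proof (cases "t > a")
  case True
  obtain m where m: "real m > 1 / (t - a)" using reals_Archimedean2 by blast
  have "eventually (\<lambda>n. Sf (real (Suc n) * (t - a)) = 1) sequentially"
    unfolding eventually_sequentially
  proof (intro exI[of _ m] allI impI)
    fix n assume "n \<ge> m"
    then have "real (Suc n) > 1 / (t - a)" using m by linarith
    then have "real (Suc n) * (t - a) \<ge> 1" using True by (auto simp: field_simps)
    then show "Sf (real (Suc n) * (t - a)) = 1" by (rule Sf_ge1)
  qed
  then show ?thesis using True by (auto intro: tendsto_eventually)
next
  case False
  then have "Sf (real (Suc n) * (t - a)) = 0" for n by (intro Sf_le0) (auto simp: mult_nonneg_nonpos)
  then show ?thesis using False by simp
qed

lemma phi_lim: "(\<lambda>n. phi (real (Suc n)) a b t) \<longlonglongrightarrow> indicator {a<..} t - indicator {b<..} t"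
  unfolding phi_def by (intro tendsto_diff Sf_lim)




lemma tail_half: assumes "\<delta> > 0"
  shows "(\<integral>\<^sup>+z. indicator {\<delta>..} z * ennreal (1 / z^2) \<partial>lborel) = ennreal (1 / \<delta>)"
proof -
  have "(\<integral>\<^sup>+z\<in>{\<delta>..}. ennreal (1 / z^2) \<partial>lborel) = ennreal (0 - (- (1 / \<delta>)))"
  proof (rule nn_integral_FTC_atLeast)
    show "((\<lambda>z. - (1 / z)) has_real_derivative 1 / z^2) (at z)" if "\<delta> \<le> z" for z
      using that assms by (auto intro!: derivative_eq_intros simp: power2_eq_square field_simps)
    show "((\<lambda>z::real. - (1 / z)) \<longlongrightarrow> (0::real)) at_top"
    proof -
      have "((\<lambda>z::real. 1 / z) \<longlongrightarrow> 0) at_top"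
        using tendsto_divide_0[OF tendsto_const[of "1::real"] filterlim_at_top_imp_at_infinity[OF filterlim_ident]] .
      then have "((\<lambda>z::real. - (1 / z)) \<longlongrightarrow> - 0) at_top" by (rule tendsto_minus)
      then show ?thesis by simp
    qed
  qed auto
  then show ?thesis by (simp add: mult.commute)
qed

lemma tail_fin: assumes "\<delta> > 0"
  shows "(\<integral>\<^sup>+z. indicator {z. \<delta> \<le> \<bar>z\<bar>} z * ennreal (1 / z^2) \<partial>lborel) \<le> ennreal (2 / \<delta>)"
proof -
  have "(\<integral>\<^sup>+z. indicator {z. \<delta> \<le> \<bar>z\<bar>} z * ennreal (1 / z^2) \<partial>lborel) \<le>
        (\<integral>\<^sup>+z. indicator {\<delta>..} z * ennreal (1 / z^2) + indicator {\<delta>..} (-z) * ennreal (1 / (-z)^2) \<partial>lborel)"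
    by (intro nn_integral_mono) (auto simp: indicator_def abs_if)
  also have "\<dots> = (\<integral>\<^sup>+z. indicator {\<delta>..} z * ennreal (1 / z^2) \<partial>lborel) + (\<integral>\<^sup>+z. indicator {\<delta>..} (-z) * ennreal (1 / (-z)^2) \<partial>lborel)"
    by (intro nn_integral_add) auto
  also have "(\<integral>\<^sup>+z. indicator {\<delta>..} (-z) * ennreal (1 / (-z)^2) \<partial>lborel) = (\<integral>\<^sup>+z. indicator {\<delta>..} z * ennreal (1 / z^2) \<partial>lborel)"
    using nn_integral_real_affine[of "\<lambda>z. indicator {\<delta>..} z * ennreal (1 / z^2)" "-1" 0] by auto
  also have "(\<integral>\<^sup>+z. indicator {\<delta>..} z * ennreal (1 / z^2) \<partial>lborel) = ennreal (1 / \<delta>)"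
    by (rule tail_half[OF assms])
  also have "ennreal (1 / \<delta>) + ennreal (1 / \<delta>) = ennreal (2 / \<delta>)"
    using assms by (simp add: ennreal_plus[symmetric] del: ennreal_plus)
  finally show ?thesis .
qed

lemma tail_shift: assumes "\<delta> > 0"
  shows "(\<integral>\<^sup>+y. indicator {y. \<delta> \<le> \<bar>x - y\<bar>} y * ennreal (1 / \<bar>x - y\<bar>^2) \<partial>lborel) \<le> ennreal (2 / \<delta>)"
proof -
  have "(\<integral>\<^sup>+y. indicator {y. \<delta> \<le> \<bar>x - y\<bar>} y * ennreal (1 / \<bar>x - y\<bar>^2) \<partial>lborel) =
     (\<integral>\<^sup>+z. indicator {y. \<delta> \<le> \<bar>x - y\<bar>} (x + z) * ennreal (1 / \<bar>x - (x + z)\<bar>^2) \<partial>lborel)"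
    using nn_integral_real_affine[of "\<lambda>y. indicator {y. \<delta> \<le> \<bar>x - y\<bar>} y * ennreal (1 / \<bar>x - y\<bar>^2)" 1 x] by auto
  also have "\<dots> = (\<integral>\<^sup>+z. indicator {z. \<delta> \<le> \<bar>z\<bar>} z * ennreal (1 / z^2) \<partial>lborel)"
    by (intro nn_integral_cong) (auto simp: indicator_def)
  finally show ?thesis using tail_fin[OF assms] by simp
qed

lemma null_times1: "N \<in> null_sets lborel \<Longrightarrow> N \<times> (UNIV::real set) \<in> null_sets (lborel \<Otimes>\<^sub>M lborel)"
  by (auto simp: null_sets_def lborel.emeasure_pair_measure_Times)

lemma null_times2: "N \<in> null_sets lborel \<Longrightarrow> (UNIV::real set) \<times> N \<in> null_sets (lborel \<Otimes>\<^sub>M lborel)"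
  by (auto simp: null_sets_def lborel.emeasure_pair_measure_Times)

lemma strip_bound: assumes "\<delta> > 0"
  shows "(\<integral>\<^sup>+p. indicator {p. \<bar>fst p\<bar> \<le> R \<and> \<delta> \<le> \<bar>fst p - snd p\<bar>} p * ennreal (1 / \<bar>fst p - snd p\<bar>^2) \<partial>(lborel \<Otimes>\<^sub>M lborel)) < \<infinity>"
proof -
  have "(\<integral>\<^sup>+p. indicator {p. \<bar>fst p\<bar> \<le> R \<and> \<delta> \<le> \<bar>fst p - snd p\<bar>} p * ennreal (1 / \<bar>fst p - snd p\<bar>^2) \<partial>(lborel \<Otimes>\<^sub>M lborel))
     = (\<integral>\<^sup>+x. \<integral>\<^sup>+y. indicator {p. \<bar>fst p\<bar> \<le> R \<and> \<delta> \<le> \<bar>fst p - snd p\<bar>} (x,y) * ennreal (1 / \<bar>x - y\<bar>^2) \<partial>lborel \<partial>lborel)"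
    by (subst lborel.nn_integral_fst[symmetric]) auto
  also have "\<dots> = (\<integral>\<^sup>+x. indicator {-R..R} x * (\<integral>\<^sup>+y. indicator {y. \<delta> \<le> \<bar>x - y\<bar>} y * ennreal (1 / \<bar>x - y\<bar>^2) \<partial>lborel) \<partial>lborel)"
    by (intro nn_integral_cong, subst nn_integral_cmult[symmetric]) (auto intro!: nn_integral_cong simp: indicator_def abs_le_iff)
  also have "\<dots> \<le> (\<integral>\<^sup>+x. indicator {-R..R} x * ennreal (2 / \<delta>) \<partial>lborel)"
    by (intro nn_integral_mono mult_left_mono tail_shift assms) auto
  also have "\<dots> = ennreal (2 / \<delta>) * emeasure lborel {-R..R}"
    by (subst nn_integral_cmult_indicator[symmetric]) (auto simp: mult.commute)
  also have "\<dots> < \<infinity>" using emeasure_bounded_finite[OF bounded_closed_interval[of "-R" R]] by (simp add: ennreal_mult_less_top)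
  finally show ?thesis .
qed

lemma strip_bound2: assumes "\<delta> > 0"
  shows "(\<integral>\<^sup>+p. indicator {p. \<bar>snd p\<bar> \<le> R \<and> \<delta> \<le> \<bar>fst p - snd p\<bar>} p * ennreal (1 / \<bar>fst p - snd p\<bar>^2) \<partial>(lborel \<Otimes>\<^sub>M lborel)) < \<infinity>"
proof -
  have "(\<integral>\<^sup>+p. indicator {p. \<bar>snd p\<bar> \<le> R \<and> \<delta> \<le> \<bar>fst p - snd p\<bar>} p * ennreal (1 / \<bar>fst p - snd p\<bar>^2) \<partial>(lborel \<Otimes>\<^sub>M lborel))
     = (\<integral>\<^sup>+y. \<integral>\<^sup>+x. indicator {p. \<bar>snd p\<bar> \<le> R \<and> \<delta> \<le> \<bar>fst p - snd p\<bar>} (x,y) * ennreal (1 / \<bar>x - y\<bar>^2) \<partial>lborel \<partial>lborel)"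
    by (subst lborel_pair.nn_integral_snd[symmetric]) auto
  also have "\<dots> = (\<integral>\<^sup>+y. indicator {-R..R} y * (\<integral>\<^sup>+x. indicator {x. \<delta> \<le> \<bar>y - x\<bar>} x * ennreal (1 / \<bar>y - x\<bar>^2) \<partial>lborel) \<partial>lborel)"
    by (intro nn_integral_cong, subst nn_integral_cmult[symmetric]) (auto intro!: nn_integral_cong simp: indicator_def abs_minus_commute abs_le_iff)
  also have "\<dots> \<le> (\<integral>\<^sup>+y. indicator {-R..R} y * ennreal (2 / \<delta>) \<partial>lborel)"
    by (intro nn_integral_mono mult_left_mono tail_shift assms) auto
  also have "\<dots> = ennreal (2 / \<delta>) * emeasure lborel {-R..R}"
    by (subst nn_integral_cmult_indicator[symmetric]) (auto simp: mult.commute)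
  also have "\<dots> < \<infinity>" using emeasure_bounded_finite[OF bounded_closed_interval[of "-R" R]] by (simp add: ennreal_mult_less_top)
  finally show ?thesis .
qed

lemma final_bound:
  fixes u G :: "real \<Rightarrow> real"
  assumes uG: "AE x in lborel. u x = G x" and supp: "AE x in lborel. \<bar>x\<bar> > R \<longrightarrow> u x = 0"
    and d: "\<delta> > 0" and unif: "\<And>x y. \<bar>x - y\<bar> < \<delta> \<Longrightarrow> \<bar>G x - G y\<bar> \<le> lam" and lam: "lam > 0"
  shows "nu_m1 (E_lam lam u) < \<infinity>"
proof -
  have "AE x in lborel. u x = G x \<and> (\<bar>x\<bar> > R \<longrightarrow> u x = 0)" using uG supp by auto
  from AE_E3[OF this] obtain N where N0: "N \<in> null_sets lborel" "\<And>x. x \<in> space lborel - N \<Longrightarrow> u x = G x \<and> (\<bar>x\<bar> > R \<longrightarrow> u x = 0)"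
    by blast
  then have N: "N \<in> null_sets lborel" "\<And>x. x \<notin> N \<Longrightarrow> u x = G x \<and> (\<bar>x\<bar> > R \<longrightarrow> u x = 0)"
    using N0(2)[of x] by (simp_all add: N0(1)) (use N0(2) in simp)
  have "AE p in lborel \<Otimes>\<^sub>M lborel. p \<notin> N \<times> UNIV \<union> UNIV \<times> N"
    using null_times1[OF N(1)] null_times2[OF N(1)] by (intro AE_not_in) auto
  define B1 where "B1 = {p::real\<times>real. \<bar>fst p\<bar> \<le> R \<and> \<delta> \<le> \<bar>fst p - snd p\<bar>}"
  define B2 where "B2 = {p::real\<times>real. \<bar>snd p\<bar> \<le> R \<and> \<delta> \<le> \<bar>fst p - snd p\<bar>}"
  define w where "w p = ennreal (1 / \<bar>fst p - snd p\<bar>^2)" for p :: "real \<times> real"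
  have pw: "indicator (E_lam lam u) p * (if fst p \<noteq> snd p then ennreal (1 / \<bar>fst p - snd p\<bar> ^ 2) else 0)
       \<le> indicator B1 p * w p + indicator B2 p * w p" if p: "p \<notin> N \<times> UNIV \<union> UNIV \<times> N" for p
  proof (cases "p \<in> E_lam lam u")
    case True
    obtain x y where xy: "p = (x, y)" by force
    have E: "x \<noteq> y" "\<bar>u x - u y\<bar> > lam" using True xy by (auto simp: E_lam_def)
    have nx: "x \<notin> N" and ny: "y \<notin> N" using p xy by auto
    have "\<bar>G x - G y\<bar> > lam" using E N(2)[OF nx] N(2)[OF ny] by auto
    then have far: "\<delta> \<le> \<bar>x - y\<bar>" using unif[of x y] by (meson linorder_not_le)
    have "\<bar>x\<bar> \<le> R \<or> \<bar>y\<bar> \<le> R"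
    proof (rule ccontr)
      assume "\<not> (\<bar>x\<bar> \<le> R \<or> \<bar>y\<bar> \<le> R)"
      then have "u x = 0" "u y = 0" using N(2)[OF nx] N(2)[OF ny] by auto
      then show False using E lam by auto
    qed
    then show ?thesis using True xy far E(1)
      by (auto simp: B1_def B2_def w_def indicator_def)
  next
    case False then show ?thesis by simp
  qed
  have "nu_m1 (E_lam lam u) \<le> (\<integral>\<^sup>+p. indicator B1 p * w p + indicator B2 p * w p \<partial>(lborel \<Otimes>\<^sub>M lborel))"
    unfolding nu_m1_def
    by (rule nn_integral_mono_AE, rule AE_mp[OF \<open>AE p in lborel \<Otimes>\<^sub>M lborel. p \<notin> N \<times> UNIV \<union> UNIV \<times> N\<close>])
       (use pw in blast)
  also have "\<dots> = (\<integral>\<^sup>+p. indicator B1 p * w p \<partial>(lborel \<Otimes>\<^sub>M lborel)) + (\<integral>\<^sup>+p. indicator B2 p * w p \<partial>(lborel \<Otimes>\<^sub>M lborel))"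
    by (intro nn_integral_add) (auto simp: B1_def B2_def w_def)
  also have "\<dots> < \<infinity>"
    using strip_bound[OF d, of R] strip_bound2[OF d, of R] unfolding B1_def B2_def w_def
    by (simp add: ennreal_add_less_top)
  finally show ?thesis .
qed




lemma li_meas: assumes "locally_integrable u" shows "u \<in> borel_measurable lborel"
proof (rule borel_measurable_LIMSEQ_real)
  show "(\<lambda>n. indicator {- real n..real n} x * u x) \<longlonglongrightarrow> u x" for x
  proof (rule tendsto_eventually)
    obtain m where "real m \<ge> \<bar>x\<bar>" using real_arch_simple by blast
    then show "\<forall>\<^sub>F n in sequentially. indicator {- real n..real n} x * u x = u x"
      unfolding eventually_sequentially
      by (intro exI[of _ m]) (auto simp: indicator_def abs_le_iff)
  qed
  show "(\<lambda>x. indicator {- real n..real n} x * u x) \<in> borel_measurable lborel" for n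
  proof -
    have "integrable lborel (\<lambda>x. indicator {- real n..real n} x *\<^sub>R u x)"
      using assms unfolding locally_integrable_def set_integrable_def by auto
    then show ?thesis by simp
  qed
qed

lemma li_int:
  assumes u: "locally_integrable u" and h: "h \<in> borel_measurable lborel"
    and hb: "\<And>x. \<bar>h x\<bar> \<le> M" and hs: "\<And>x. x \<notin> {c..d} \<Longrightarrow> h x = 0"
  shows "integrable lborel (\<lambda>x. u x * h x)"
proof (rule Bochner_Integration.integrable_bound)
  have "integrable lborel (\<lambda>x. indicator {c..d} x *\<^sub>R u x)"
    using u unfolding locally_integrable_def set_integrable_def by auto
  then show "integrable lborel (\<lambda>x. M * (indicator {c..d} x * u x))" by auto
  show "(\<lambda>x. u x * h x) \<in> borel_measurable lborel" using li_meas[OF u] h by measurable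
  show "AE x in lborel. norm (u x * h x) \<le> norm (M * (indicator {c..d} x * u x))"
  proof (intro AE_I2)
    fix x
    have M0: "M \<ge> 0" using hb[of x] by linarith
    show "norm (u x * h x) \<le> norm (M * (indicator {c..d} x * u x))"
    proof (cases "x \<in> {c..d}")
      case True then show ?thesis using hb[of x] M0 by (simp add: abs_mult mult_right_mono mult.commute)
    next
      case False then show ?thesis using hs[of x] by simp
    qed
  qed
qed

definition Kn :: "nat \<Rightarrow> real \<Rightarrow> real" where
  "Kn n y = real (Suc n) * deriv Sf (real (Suc n) * y)"

lemma Kn_meas[measurable]: "Kn n \<in> borel_measurable borel"
proof -
  have "isCont (Kn n) y" for y unfolding Kn_def
    by (intro continuous_intros isCont_o2[OF _ isCont_dSf])
  then show ?thesis by (intro borel_measurable_continuous_onI continuous_at_imp_continuous_on ballI)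
qed

lemma Kn_supp: "y \<notin> {0..1} \<Longrightarrow> Kn n y = 0"
proof -
  assume y: "y \<notin> {0..1}"
  have "real (Suc n) * y < 0 \<or> real (Suc n) * y > 1"
  proof (cases "y < 0")
    case True then show ?thesis by (simp add: mult_pos_neg)
  next
    case False then have "y > 1" using y by auto
    moreover have "real (Suc n) * y \<ge> 1 * y" using \<open>y > 1\<close> by (intro mult_right_mono) auto
    ultimately show ?thesis by linarith
  qed
  then show ?thesis unfolding Kn_def using dSf_out by simp
qed

lemma Kn_bound: obtains C where "\<And>y. \<bar>Kn n y\<bar> \<le> C"
proof -
  obtain M where M: "\<And>x. \<bar>deriv Sf x\<bar> \<le> M" using dSf_bound by blast
  have "\<bar>Kn n y\<bar> \<le> real (Suc n) * M" for y
    unfolding Kn_def abs_mult using M[of "real (Suc n) * y"] by (simp add: mult_left_mono)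
  then show ?thesis using that by blast
qed

lemma deriv_phi_Kn: "deriv (phi (real (Suc n)) a b) x = Kn n (x - a) - Kn n (x - b)"
  by (simp add: deriv_phi Kn_def)

lemma phi_supp: assumes "c \<ge> 1" "x \<notin> {min a b .. max a b + 1}" shows "phi c a b x = 0"
proof -
  consider "x < min a b" | "x > max a b + 1" using assms by (auto simp: not_le)
  then show ?thesis
  proof cases
    case 1 then have "c * (x - a) \<le> 0" "c * (x - b) \<le> 0" using assms
      by (auto intro!: mult_nonneg_nonpos)
    then show ?thesis by (simp add: phi_def Sf_le0)
  next
    case 2 then have "x - a \<ge> 1" "x - b \<ge> 1" by auto
    then have "c * (x - a) \<ge> 1 * 1" "c * (x - b) \<ge> 1 * 1" using assms by (intro mult_mono; simp)+
    then show ?thesis by (simp add: phi_def Sf_ge1)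
  qed
qed

lemma phi_meas[measurable]: "phi c a b \<in> borel_measurable borel"
proof -
  have S: "isCont Sf x" for x using Sf_deriv DERIV_isCont by blast
  have "isCont (phi c a b) x" for x unfolding phi_def[abs_def]
    by (intro continuous_intros isCont_o2[OF _ S])
  then show ?thesis by (intro borel_measurable_continuous_onI continuous_at_imp_continuous_on ballI)
qed




locale setting =
  fixes u g :: "real \<Rightarrow> real" and R :: real
  assumes li: "locally_integrable u" and gi: "integrable lborel g"
    and weak: "\<And>\<phi>. test_function \<phi> \<Longrightarrow> (\<integral>x. u x * deriv \<phi> x \<partial>lborel) = - (\<integral>x. g x * \<phi> x \<partial>lborel)"
    and R0: "R \<ge> 0" and supp: "AE x in lborel. \<bar>x\<bar> > R \<longrightarrow> u x = 0"
begin

definition A :: "nat \<Rightarrow> real \<Rightarrow> real" where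
  "A n b = (\<integral>x. u x * Kn n (x - b) \<partial>lborel)"

definition a0 :: real where "a0 = - R - 2"

definition G :: "real \<Rightarrow> real" where
  "G b = (\<integral>t. g t * (indicator {a0<..} t - indicator {b<..} t) \<partial>lborel)"

lemma u_meas[measurable]: "u \<in> borel_measurable borel"
  using li_meas[OF li] by simp

lemma g_meas[measurable]: "g \<in> borel_measurable borel"
  using gi by (simp add: borel_measurable_integrable)

lemma intK: "integrable lborel (\<lambda>x. u x * Kn n (x - b))"
proof -
  obtain C where C: "\<And>y. \<bar>Kn n y\<bar> \<le> C" using Kn_bound by blast
  show ?thesis
    by (rule li_int[OF li _ C, where c=b and d="b+1"]) (auto intro!: Kn_supp)
qed

lemma A_diff: "A n a - A n b = - (\<integral>x. g x * phi (real (Suc n)) a b x \<partial>lborel)"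
proof -
  have tf: "test_function (phi (real (Suc n)) a b)" by (rule test_phi) auto
  have eq: "deriv (phi (real (Suc n)) a b) = (\<lambda>x. Kn n (x - a) - Kn n (x - b))"
    by (rule ext, rule deriv_phi_Kn)
  from weak[OF tf] have "(\<integral>x. u x * (Kn n (x - a) - Kn n (x - b)) \<partial>lborel) = - (\<integral>x. g x * phi (real (Suc n)) a b x \<partial>lborel)"
    unfolding eq .
  moreover have "(\<integral>x. u x * (Kn n (x - a) - Kn n (x - b)) \<partial>lborel) = A n a - A n b"
    unfolding A_def using intK[of n a] intK[of n b] by (simp add: right_diff_distrib)
  ultimately show ?thesis by simp
qed

lemma A_a0: "A n a0 = 0"
proof -
  have "AE x in lborel. u x * Kn n (x - a0) = 0"
    using supp
  proof (rule AE_mp, intro AE_I2 impI)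
    fix x assume x: "R < \<bar>x\<bar> \<longrightarrow> u x = 0"
    show "u x * Kn n (x - a0) = 0"
    proof (cases "R < \<bar>x\<bar>")
      case True then show ?thesis using x by simp
    next
      case False then have "x - a0 > 1" unfolding a0_def by auto
      then show ?thesis using Kn_supp[of "x - a0" n] by auto
    qed
  qed
  then show ?thesis unfolding A_def by (rule integral_eq_zero_AE)
qed

lemma A_eq: "A n b = (\<integral>t. g t * phi (real (Suc n)) a0 b t \<partial>lborel)"
  using A_diff[of n a0 b] A_a0[of n] by simp

lemma A_lim: "(\<lambda>n. A n b) \<longlonglongrightarrow> G b"
  unfolding A_eq G_def
proof (rule integral_dominated_convergence[where w="\<lambda>t. \<bar>g t\<bar>"])
  show "AE x in lborel. (\<lambda>n. g x * phi (real (Suc n)) a0 b x) \<longlonglongrightarrow> g x * (indicator {a0<..} x - indicator {b<..} x)"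
    by (intro AE_I2 tendsto_mult tendsto_const phi_lim)
  show "AE x in lborel. norm (g x * phi (real (Suc n)) a0 b x) \<le> \<bar>g x\<bar>" for n
    using phi_abs by (auto simp: abs_mult intro!: mult_left_le)
qed (use gi in auto)

lemma A_bnd: "\<bar>A n b\<bar> \<le> (\<integral>t. \<bar>g t\<bar> \<partial>lborel)"
proof -
  have "\<bar>A n b\<bar> \<le> (\<integral>t. \<bar>g t * phi (real (Suc n)) a0 b t\<bar> \<partial>lborel)"
    unfolding A_eq by (rule integral_abs_bound)
  also have "\<dots> \<le> (\<integral>t. \<bar>g t\<bar> \<partial>lborel)"
    using gi phi_abs
    by (intro integral_mono) (auto simp: abs_mult intro!: AE_I2 mult_left_le Bochner_Integration.integrable_bound[OF integrable_abs[OF gi]])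
  finally show ?thesis .
qed

lemma A_meas[measurable]: "A n \<in> borel_measurable borel"
proof -
  have "(\<lambda>b. \<integral>x. u x * Kn n (x - b) \<partial>lborel) \<in> borel_measurable lborel"
    by (rule lborel.borel_measurable_lebesgue_integral) measurable
  then show ?thesis unfolding A_def[abs_def] by simp
qed

lemma G_meas[measurable]: "G \<in> borel_measurable borel"
  by (rule borel_measurable_LIMSEQ_real[OF A_lim A_meas])

lemma G_bnd: "\<bar>G b\<bar> \<le> (\<integral>t. \<bar>g t\<bar> \<partial>lborel)"
  by (rule LIMSEQ_le_const2[OF tendsto_rabs[OF A_lim]]) (use A_bnd in auto)

end




context setting begin

lemma FTC_K: assumes "p \<le> q"
  shows "(\<integral>b. indicator {p..q} b * Kn n (x - b) \<partial>lborel) = phi (real (Suc n)) p q x"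
proof -
  have cK: "isCont (Kn n) y" for y unfolding Kn_def
    by (intro continuous_intros isCont_o2[OF _ isCont_dSf])
  have "(LBINT b=p..q. Kn n (x - b)) = (- Sf (real (Suc n) * (x - q))) - (- Sf (real (Suc n) * (x - p)))"
  proof (rule interval_integral_FTC_finite)
    show "continuous_on {min p q..max p q} (\<lambda>b. Kn n (x - b))"
      by (intro continuous_at_imp_continuous_on ballI isCont_o2[OF _ cK] continuous_intros)
    fix b
    have "((\<lambda>b. - Sf (real (Suc n) * (x - b))) has_real_derivative - (deriv Sf (real (Suc n) * (x - b)) * (real (Suc n) * (0 - 1)))) (at b)"
      by (intro derivative_intros DERIV_chain2[OF Sf_deriv]) (auto intro!: derivative_eq_intros)
    then have "((\<lambda>b. - Sf (real (Suc n) * (x - b))) has_real_derivative Kn n (x - b)) (at b)"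
      by (simp add: Kn_def algebra_simps)
    then show "((\<lambda>b. - Sf (real (Suc n) * (x - b))) has_vector_derivative Kn n (x - b)) (at b within {min p q..max p q})"
      by (simp add: has_real_derivative_iff_has_vector_derivative has_vector_derivative_at_within)
  qed
  then show ?thesis using assms
    by (simp add: interval_integral_Icc set_lebesgue_integral_def phi_def)
qed

lemma fub_int: assumes "p \<le> q"
  shows "integrable (lborel \<Otimes>\<^sub>M lborel) (\<lambda>(x, b). u x * (Kn n (x - b) * indicator {p..q} b))"
proof (rule integrableI_bounded)
  show "(\<lambda>(x, b). u x * (Kn n (x - b) * indicator {p..q} b)) \<in> borel_measurable (lborel \<Otimes>\<^sub>M lborel)"
    by measurable
  obtain C where C: "\<And>y. \<bar>Kn n y\<bar> \<le> C" using Kn_bound by blast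
  have C0: "C \<ge> 0" using C[of 0] by linarith
  have ui: "integrable lborel (\<lambda>x. indicator {p..q+1} x *\<^sub>R u x)"
    using li unfolding locally_integrable_def set_integrable_def by auto
  then have ufin: "(\<integral>\<^sup>+x. ennreal (norm (indicator {p..q+1} x *\<^sub>R u x)) \<partial>lborel) < \<infinity>"
    by (simp add: integrable_iff_bounded)
  have "(\<integral>\<^sup>+z. ennreal (norm ((\<lambda>(x, b). u x * (Kn n (x - b) * indicator {p..q} b)) z)) \<partial>(lborel \<Otimes>\<^sub>M lborel))
      \<le> (\<integral>\<^sup>+z. ennreal (norm (indicator {p..q+1} (fst z) *\<^sub>R u (fst z))) * ennreal (C * indicator {p..q} (snd z)) \<partial>(lborel \<Otimes>\<^sub>M lborel))"
  proof (intro nn_integral_mono)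
    fix z :: "real \<times> real"
    obtain x b where z: "z = (x, b)" by force
    have "\<bar>u x * (Kn n (x - b) * indicator {p..q} b)\<bar> \<le> \<bar>indicator {p..q+1} x * u x\<bar> * (C * indicator {p..q} b)"
    proof (cases "b \<in> {p..q} \<and> x - b \<in> {0..1}")
      case True
      then have "x \<in> {p..q+1}" by auto
      then show ?thesis using True C[of "x - b"] by (simp add: abs_mult mult_left_mono)
    next
      case False
      then consider "b \<notin> {p..q}" | "x - b \<notin> {0..1}" by blast
      then show ?thesis
      proof cases
        case 1 then show ?thesis by simp
      next
        case 2 then show ?thesis using Kn_supp[OF 2] C0 by (simp add: mult_nonneg_nonneg)
      qed
    qed
    then show "ennreal (norm ((\<lambda>(x, b). u x * (Kn n (x - b) * indicator {p..q} b)) z))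
      \<le> ennreal (norm (indicator {p..q+1} (fst z) *\<^sub>R u (fst z))) * ennreal (C * indicator {p..q} (snd z))"
      using z C0 by (simp add: ennreal_mult[symmetric] del: ennreal_mult)
  qed
  also have "\<dots> = (\<integral>\<^sup>+x. \<integral>\<^sup>+b. ennreal (norm (indicator {p..q+1} x *\<^sub>R u x)) * ennreal (C * indicator {p..q} b) \<partial>lborel \<partial>lborel)"
    by (subst lborel.nn_integral_fst[symmetric]) auto
  also have "\<dots> = (\<integral>\<^sup>+x. ennreal (norm (indicator {p..q+1} x *\<^sub>R u x)) * (\<integral>\<^sup>+b. ennreal (C * indicator {p..q} b) \<partial>lborel) \<partial>lborel)"
    by (intro nn_integral_cong nn_integral_cmult) auto
  also have "\<dots> = (\<integral>\<^sup>+x. ennreal (norm (indicator {p..q+1} x *\<^sub>R u x)) \<partial>lborel) * (\<integral>\<^sup>+b. ennreal (C * indicator {p..q} b) \<partial>lborel)"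
    by (rule nn_integral_multc) auto
  also have "(\<integral>\<^sup>+b. ennreal (C * indicator {p..q} b) \<partial>lborel) = ennreal C * emeasure lborel {p..q}"
    using C0 by (subst nn_integral_cmult_indicator[symmetric]) (auto intro!: nn_integral_cong simp: indicator_def)
  also have "(\<integral>\<^sup>+x. ennreal (norm (indicator {p..q+1} x *\<^sub>R u x)) \<partial>lborel) * (ennreal C * emeasure lborel {p..q}) < \<infinity>"
    using ufin emeasure_bounded_finite[OF bounded_closed_interval[of p q]]
    by (simp add: ennreal_mult_less_top)
  finally show "(\<integral>\<^sup>+z. ennreal (norm ((\<lambda>(x, b). u x * (Kn n (x - b) * indicator {p..q} b)) z)) \<partial>(lborel \<Otimes>\<^sub>M lborel)) < \<infinity>" .
qed

lemma fub: assumes "p \<le> q"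
  shows "(\<integral>b. indicator {p..q} b * A n b \<partial>lborel) = (\<integral>x. u x * phi (real (Suc n)) p q x \<partial>lborel)"
proof -
  have "(LBINT b. LBINT x. u x * (Kn n (x - b) * indicator {p..q} b)) = (LBINT x. LBINT b. u x * (Kn n (x - b) * indicator {p..q} b))"
    using lborel_pair.Fubini_integral[OF fub_int[OF assms, of n]] by simp
  moreover have "(LBINT x. u x * (Kn n (x - b) * indicator {p..q} b)) = indicator {p..q} b * A n b" for b
    unfolding A_def by (simp add: mult.assoc[symmetric] mult.commute[of "indicator {p..q} b"])
  moreover have "(LBINT b. Kn n (x - b) * indicator {p..q} b) = phi (real (Suc n)) p q x" for x
    using FTC_K[OF assms, of n x] by (simp add: mult.commute)
  ultimately show ?thesis by simp
qed

end



context setting begin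

lemma lim1: "(\<lambda>n. \<integral>b. indicator {p..q} b * A n b \<partial>lborel) \<longlonglongrightarrow> (\<integral>b. indicator {p..q} b * G b \<partial>lborel)"
proof (rule integral_dominated_convergence[where w="\<lambda>b. indicator {p..q} b * (\<integral>t. \<bar>g t\<bar> \<partial>lborel)"])
  show "AE x in lborel. (\<lambda>n. indicator {p..q} x * A n x) \<longlonglongrightarrow> indicator {p..q} x * G x"
    by (intro AE_I2 tendsto_mult tendsto_const A_lim)
  show "AE x in lborel. norm (indicator {p..q} x * A n x) \<le> indicator {p..q} x * (\<integral>t. \<bar>g t\<bar> \<partial>lborel)" for n
    using A_bnd by (intro AE_I2) (auto simp: indicator_def)
  have "integrable lborel (indicat_real {p..q})"
    by (rule integrable_real_indicator) (use emeasure_bounded_finite[OF bounded_closed_interval[of p q]] in auto)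
  then show "integrable lborel (\<lambda>b. indicator {p..q} b * (\<integral>t. \<bar>g t\<bar> \<partial>lborel))" by auto
qed auto

lemma lim2: assumes "p \<le> q"
  shows "(\<lambda>n. \<integral>x. u x * phi (real (Suc n)) p q x \<partial>lborel) \<longlonglongrightarrow> (\<integral>x. u x * indicator {p<..q} x \<partial>lborel)"
proof (rule integral_dominated_convergence[where w="\<lambda>x. \<bar>indicator {p..q+1} x *\<^sub>R u x\<bar>"])
  show "integrable lborel (\<lambda>x. \<bar>indicator {p..q+1} x *\<^sub>R u x\<bar>)"
    using li unfolding locally_integrable_def set_integrable_def by auto
  have "indicator {p<..} x - indicator {q<..} x = (indicator {p<..q} x :: real)" for x
    using assms by (auto simp: indicator_def)
  then show "AE x in lborel. (\<lambda>n. u x * phi (real (Suc n)) p q x) \<longlonglongrightarrow> u x * indicator {p<..q} x"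
    using phi_lim by (intro AE_I2 tendsto_mult tendsto_const) metis
  show "AE x in lborel. norm (u x * phi (real (Suc n)) p q x) \<le> \<bar>indicator {p..q+1} x *\<^sub>R u x\<bar>" for n
  proof (intro AE_I2)
    fix x
    show "norm (u x * phi (real (Suc n)) p q x) \<le> \<bar>indicator {p..q+1} x *\<^sub>R u x\<bar>"
    proof (cases "x \<in> {p..q+1}")
      case True then show ?thesis using phi_abs[of "real (Suc n)" p q x]
        by (simp add: abs_mult mult_left_le)
    next
      case False then have "phi (real (Suc n)) p q x = 0"
        using assms by (intro phi_supp) auto
      then show ?thesis by simp
    qed
  qed
qed auto

lemma key: assumes "p \<le> q"
  shows "(\<integral>x. u x * indicator {p<..q} x \<partial>lborel) = (\<integral>b. indicator {p..q} b * G b \<partial>lborel)"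
  using LIMSEQ_unique[OF lim2[OF assms] lim1[of p q, unfolded fub[OF assms]]] .

lemma G_int: "integrable lborel (\<lambda>b. indicator S b * G b)" if "S \<in> sets lborel" "emeasure lborel S < \<infinity>"
proof (rule Bochner_Integration.integrable_bound[where f="\<lambda>b. indicator S b * (\<integral>t. \<bar>g t\<bar> \<partial>lborel)"])
  show "integrable lborel (\<lambda>b. indicator S b * (\<integral>t. \<bar>g t\<bar> \<partial>lborel))" using that by auto
  show "AE x in lborel. norm (indicator S x * G x) \<le> norm (indicator S x * (\<integral>t. \<bar>g t\<bar> \<partial>lborel))"
    using G_bnd by (intro AE_I2) (auto simp: indicator_def)
qed (use that in auto)

end

lemma dens0:
  fixes f :: "real \<Rightarrow> real"
  assumes fm[measurable]: "f \<in> borel_measurable borel"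
    and fi: "\<And>p q. p \<le> q \<Longrightarrow> integrable lborel (\<lambda>x. f x * indicator {p<..q} x)"
    and f0: "\<And>p q. p \<le> q \<Longrightarrow> (\<integral>x. f x * indicator {p<..q} x \<partial>lborel) = 0"
  shows "AE x in lborel. f x = 0"
proof -
  have hm: "AE x in lborel. f x * indicator {- real m<..real m} x = 0" for m :: nat
  proof -
    define M where "M = real m"
    define h where "h x = f x * indicator {-M<..M} x" for x
    have hmeas[measurable]: "h \<in> borel_measurable borel" unfolding h_def by measurable
    have hi: "integrable lborel h" unfolding h_def M_def by (rule fi) auto
    have hc: "(\<integral>x. h x * indicator {c<..} x \<partial>lborel) = 0" for c
    proof (cases "max c (-M) \<le> M")
      case True
      have "h x * indicator {c<..} x = f x * indicator {max c (-M)<..M} x" for x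
        by (auto simp: h_def indicator_def)
      then show ?thesis using f0[OF True] by simp
    next
      case False
      have z: "(\<lambda>x. h x * indicator {c<..} x) = (\<lambda>x. 0)"
        using False by (auto simp: h_def indicator_def)
      show ?thesis by (simp only: z integral_zero)
    qed
    have hci: "integrable lborel (\<lambda>x. h x * indicator {c<..} x)" for c
    proof -
      have "integrable lborel (\<lambda>x. indicator {c<..} x *\<^sub>R h x)"
        by (rule integrable_mult_indicator) (use hi in auto)
      then show ?thesis by (simp add: mult.commute)
    qed
    have eqc: "(\<integral>\<^sup>+x. ennreal (h x) * indicator {c<..} x \<partial>lborel) = (\<integral>\<^sup>+x. ennreal (- h x) * indicator {c<..} x \<partial>lborel)"
      (is "?L = ?R") and fin: "(\<integral>\<^sup>+x. ennreal (h x) * indicator {c<..} x \<partial>lborel) < \<infinity>" for c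
    proof -
      have i1: "integrable lborel (\<lambda>x. max (h x * indicator {c<..} x) 0)" using hci[of c] by auto
      have i2: "integrable lborel (\<lambda>x. max (- (h x * indicator {c<..} x)) 0)" using hci[of c] by auto
      have "?L = (\<integral>\<^sup>+x. ennreal (max (h x * indicator {c<..} x) 0) \<partial>lborel)"
        by (intro nn_integral_cong) (auto simp: indicator_def ennreal_neg max_def)
      also have "\<dots> = ennreal (\<integral>x. max (h x * indicator {c<..} x) 0 \<partial>lborel)"
        using i1 by (intro nn_integral_eq_integral) auto
      finally have L: "?L = ennreal (\<integral>x. max (h x * indicator {c<..} x) 0 \<partial>lborel)" .
      have "?R = (\<integral>\<^sup>+x. ennreal (max (- (h x * indicator {c<..} x)) 0) \<partial>lborel)"
        by (intro nn_integral_cong) (auto simp: indicator_def ennreal_neg max_def)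
      also have "\<dots> = ennreal (\<integral>x. max (- (h x * indicator {c<..} x)) 0 \<partial>lborel)"
        using i2 by (intro nn_integral_eq_integral) auto
      finally have R: "?R = ennreal (\<integral>x. max (- (h x * indicator {c<..} x)) 0 \<partial>lborel)" .
      have "(\<integral>x. max (h x * indicator {c<..} x) 0 \<partial>lborel) - (\<integral>x. max (- (h x * indicator {c<..} x)) 0 \<partial>lborel)
          = (\<integral>x. max (h x * indicator {c<..} x) 0 - max (- (h x * indicator {c<..} x)) 0 \<partial>lborel)"
        using i1 i2 by simp
      also have "\<dots> = (\<integral>x. h x * indicator {c<..} x \<partial>lborel)"
        by (intro Bochner_Integration.integral_cong) auto
      finally show "?L = ?R" using L R hc[of c] by simp
      show "?L < \<infinity>" using L by simp
    qed
    have "density lborel (\<lambda>x. ennreal (h x)) = density lborel (\<lambda>x. ennreal (- h x))"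
    proof (rule measure_eqI_lessThan)
      show "emeasure (density lborel (\<lambda>x. ennreal (h x))) {x<..} < \<infinity>" for x
        using fin[of x] by (simp add: emeasure_density)
      show "emeasure (density lborel (\<lambda>x. ennreal (h x))) {x<..} = emeasure (density lborel (\<lambda>x. ennreal (- h x))) {x<..}" for x
        using eqc[of x] by (simp add: emeasure_density)
    qed auto
    then have "AE x in lborel. ennreal (h x) = ennreal (- h x)"
      by (intro sigma_finite_measure.density_unique[OF sigma_finite_lborel]) auto
    then have "AE x in lborel. h x = 0"
    proof (rule eventually_mono)
      fix x assume e: "ennreal (h x) = ennreal (- h x)"
      show "h x = 0"
      proof (rule ccontr)
        assume "h x \<noteq> 0"
        then consider "h x > 0" | "h x < 0" by linarith
        then show False
        proof cases
          case 1 then have "ennreal (- h x) = 0" by (simp add: ennreal_neg)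
          then show False using e 1 by simp
        next
          case 2 then have "ennreal (h x) = 0" by (simp add: ennreal_neg)
          then show False using e 2 by simp
        qed
      qed
    qed
    then show ?thesis unfolding h_def M_def .
  qed
  have "AE x in lborel. \<forall>m::nat. f x * indicator {- real m<..real m} x = 0"
    using hm by (subst AE_all_countable) auto
  then show ?thesis
  proof (rule eventually_mono)
    fix x assume a: "\<forall>m::nat. f x * indicator {- real m<..real m} x = 0"
    obtain m :: nat where "real m > \<bar>x\<bar>" using reals_Archimedean2 by blast
    then show "f x = 0" using a[rule_format, of m] by (auto simp: indicator_def split: if_splits)
  qed
qed




lemma Ioc_fin: "emeasure lborel {a<..b::real} < \<infinity>"
proof -
  have "{a<..b} \<subseteq> {a..b}" by (auto simp: subset_eq)
  then show ?thesis using emeasure_bounded_finite[OF bounded_subset[OF bounded_closed_interval[of a b]], of "{a<..b}"] by blast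
qed

lemma abs_cont:
  fixes g :: "real \<Rightarrow> real"
  assumes gi: "integrable lborel g" and e: "\<epsilon> > 0"
  shows "\<exists>\<delta>>0. \<forall>a b. a \<le> b \<longrightarrow> b - a < \<delta> \<longrightarrow> (\<integral>t. \<bar>g t\<bar> * indicator {a<..b} t \<partial>lborel) \<le> \<epsilon>"
proof -
  define tr where "tr m t = max (\<bar>g t\<bar> - real m) 0" for m :: nat and t
  have gm[measurable]: "g \<in> borel_measurable lborel" using gi by auto
  have tri: "integrable lborel (tr m)" for m
    unfolding tr_def by (rule Bochner_Integration.integrable_bound[OF integrable_abs[OF gi]]) auto
  have "(\<lambda>m. \<integral>t. tr m t \<partial>lborel) \<longlonglongrightarrow> (\<integral>(t::real). 0 \<partial>lborel)"
  proof (rule integral_dominated_convergence[where w="\<lambda>t. \<bar>g t\<bar>"])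
    show "AE x in lborel. (\<lambda>m. tr m x) \<longlonglongrightarrow> 0"
    proof (intro AE_I2 tendsto_eventually)
      fix x
      obtain m0 :: nat where "real m0 \<ge> \<bar>g x\<bar>" using real_arch_simple by blast
      then show "\<forall>\<^sub>F m in sequentially. tr m x = 0"
        unfolding eventually_sequentially tr_def by (intro exI[of _ m0]) auto
    qed
    show "AE x in lborel. norm (tr m x) \<le> \<bar>g x\<bar>" for m
      by (intro AE_I2) (auto simp: tr_def)
  qed (use gi in \<open>auto simp: tr_def\<close>)
  then have "(\<lambda>m. \<integral>t. tr m t \<partial>lborel) \<longlonglongrightarrow> 0" by simp
  then have "eventually (\<lambda>m. (\<integral>t. tr m t \<partial>lborel) < \<epsilon> / 2) sequentially"
    using e by (intro order_tendstoD(2)) auto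
  then obtain m where m: "(\<integral>t. tr m t \<partial>lborel) < \<epsilon> / 2"
    by (auto simp: eventually_sequentially)
  define \<delta> where "\<delta> = \<epsilon> / (2 * (real m + 1))"
  have d: "\<delta> > 0" using e by (simp add: \<delta>_def)
  have "(\<integral>t. \<bar>g t\<bar> * indicator {a<..b} t \<partial>lborel) \<le> \<epsilon>" if ab: "a \<le> b" "b - a < \<delta>" for a b
  proof -
    have ii: "integrable lborel (indicat_real {a<..b})"
      by (rule integrable_real_indicator) (use Ioc_fin[of a b] in auto)
    have "(\<integral>t. \<bar>g t\<bar> * indicator {a<..b} t \<partial>lborel) \<le> (\<integral>t. tr m t + real m * indicator {a<..b} t \<partial>lborel)"
    proof (rule integral_mono)
      show "integrable lborel (\<lambda>t. \<bar>g t\<bar> * indicator {a<..b} t)"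
        using integrable_mult_indicator[of "{a<..b}" lborel "\<lambda>t. \<bar>g t\<bar>"] gi by (simp add: mult.commute)
      show "integrable lborel (\<lambda>t. tr m t + real m * indicator {a<..b} t)"
        using tri ii by auto
      show "\<bar>g t\<bar> * indicator {a<..b} t \<le> tr m t + real m * indicator {a<..b} t" for t
        by (auto simp: tr_def indicator_def)
    qed
    also have "\<dots> = (\<integral>t. tr m t \<partial>lborel) + real m * (b - a)"
      using tri ii ab by simp
    also have "real m * (b - a) \<le> real m * \<delta>" using ab by (intro mult_left_mono) auto
    also have "real m * \<delta> \<le> \<epsilon> / 2"
      using e by (simp add: \<delta>_def field_simps)
    finally show ?thesis using m by linarith
  qed
  then show ?thesis using d by blast
qed

context setting begin

lemma G_diff: assumes "x \<le> y" shows "G y - G x = (\<integral>t. g t * indicator {x<..y} t \<partial>lborel)"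
proof -
  have i: "integrable lborel (\<lambda>t. g t * (indicator {a0<..} t - indicator {b<..} t))" for b
    by (rule Bochner_Integration.integrable_bound[OF integrable_abs[OF gi]]) (auto simp: indicator_def)
  have "G y - G x = (\<integral>t. g t * (indicator {a0<..} t - indicator {y<..} t) - g t * (indicator {a0<..} t - indicator {x<..} t) \<partial>lborel)"
    unfolding G_def using i[of x] i[of y] by simp
  also have "\<dots> = (\<integral>t. g t * indicator {x<..y} t \<partial>lborel)"
    using assms by (intro Bochner_Integration.integral_cong) (auto simp: indicator_def)
  finally show ?thesis .
qed

lemma G_unif: assumes "lam > 0"
  shows "\<exists>\<delta>>0. \<forall>x y. \<bar>x - y\<bar> < \<delta> \<longrightarrow> \<bar>G x - G y\<bar> \<le> lam"
proof -
  obtain \<delta> where d: "\<delta> > 0" and D: "\<And>a b. a \<le> b \<Longrightarrow> b - a < \<delta> \<Longrightarrow> (\<integral>t. \<bar>g t\<bar> * indicator {a<..b} t \<partial>lborel) \<le> lam"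
    using abs_cont[OF gi assms] by blast
  have *: "\<bar>G y - G x\<bar> \<le> lam" if "x \<le> y" "y - x < \<delta>" for x y
  proof -
    have "\<bar>G y - G x\<bar> \<le> (\<integral>t. \<bar>g t * indicator {x<..y} t\<bar> \<partial>lborel)"
      unfolding G_diff[OF that(1)] by (rule integral_abs_bound)
    also have "\<dots> = (\<integral>t. \<bar>g t\<bar> * indicator {x<..y} t \<partial>lborel)"
      by (intro Bochner_Integration.integral_cong) (auto simp: indicator_def)
    also have "\<dots> \<le> lam" using D that by blast
    finally show ?thesis .
  qed
  have "\<bar>G x - G y\<bar> \<le> lam" if "\<bar>x - y\<bar> < \<delta>" for x y
  proof (cases "x \<le> y")
    case True then show ?thesis using *[of x y] that by (simp add: abs_minus_commute)
  next
    case False then show ?thesis using *[of y x] that by simp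
  qed
  then show ?thesis using d by blast
qed

lemma uG: "AE x in lborel. u x = G x"
proof -
  have "AE x in lborel. u x - G x = 0"
  proof (rule dens0)
    show "(\<lambda>x. u x - G x) \<in> borel_measurable borel" by measurable
    fix p q :: real assume pq: "p \<le> q"
    have iu: "integrable lborel (\<lambda>x. u x * indicator {p<..q} x)"
      by (rule li_int[OF li, where M=1 and c=p and d=q]) (auto simp: indicator_def)
    have iG: "integrable lborel (\<lambda>x. G x * indicator {p<..q} x)"
      using G_int[of "{p<..q}"] Ioc_fin[of p q]
      by (simp add: mult.commute)
    show "integrable lborel (\<lambda>x. (u x - G x) * indicator {p<..q} x)"
      using iu iG by (simp add: left_diff_distrib)
    have "(\<integral>x. G x * indicator {p<..q} x \<partial>lborel) = (\<integral>b. indicator {p..q} b * G b \<partial>lborel)"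
      by (intro integral_cong_AE) (use AE_lborel_singleton[of p] in \<open>auto simp: indicator_def elim!: eventually_mono\<close>)
    then show "(\<integral>x. (u x - G x) * indicator {p<..q} x \<partial>lborel) = 0"
      using key[OF pq] iu iG by (simp add: left_diff_distrib)
  qed
  then show ?thesis by (rule eventually_mono) simp
qed

end

theorem lemma6p5:
  fixes u :: "real \<Rightarrow> real"
  assumes "u \<in> dot_W11"
    and "\<exists>R. AE x in lborel. \<bar>x\<bar> > R \<longrightarrow> u x = 0"
  shows "\<forall>lam>0. nu_m1 (E_lam lam u) < \<infinity>"
proof (intro allI impI)
  fix lam :: real assume lam: "lam > 0"
  obtain R0 where R0: "AE x in lborel. \<bar>x\<bar> > R0 \<longrightarrow> u x = 0" using assms(2) by blast
  define R where "R = max R0 0"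
  have supp: "AE x in lborel. \<bar>x\<bar> > R \<longrightarrow> u x = 0"
    using R0 by (rule eventually_mono) (auto simp: R_def)
  obtain g where li: "locally_integrable u" and gi: "integrable lborel g"
    and w: "\<And>\<phi>. test_function \<phi> \<Longrightarrow> (\<integral>x. u x * deriv \<phi> x \<partial>lborel) = - (\<integral>x. g x * \<phi> x \<partial>lborel)"
    using assms(1) unfolding dot_W11_def by blast
  interpret setting u g R
    by unfold_locales (use li gi w supp in \<open>auto simp: R_def\<close>)
  obtain \<delta> where d: "\<delta> > 0" and D: "\<And>x y. \<bar>x - y\<bar> < \<delta> \<Longrightarrow> \<bar>G x - G y\<bar> \<le> lam"
    using G_unif[OF lam] by blast
  show "nu_m1 (E_lam lam u) < \<infinity>"
    by (rule final_bound[OF uG supp d D lam])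
qed



end
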